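(* Consider the NWLA-CuSum stopping time $\overline{\tau}(b)$ with window size $w$ as defined in the context. For any change-point $\nu\ge1$ and any $b>0$, $$\operatorname{ess\,sup}\mathbb{E}_\nu\big[(\overline{\tau}(b)-\nu+1)^+\mid\mathcal{F}_{\nu-1}\big]\le\mathbb{E}_1[\overline{\tau}(b)].$$
   Context: Let $X_1,X_2,\dots\in\mathbb{R}^d$ be independent; for a deterministic change-point $\nu\ge1$, $X_1,\dots,X_{\nu-1}$ have known density $p_0$ and $X_\nu,X_{\nu+1},\dots$ have density $p_1$, w.r.t. a dominating measure $\mu$. $\mathbb{P}_\nu,\mathbb{E}_\nu$ denote probability/expectation with change-point $\nu$; $\mathcal{F}_0$ trivial, $\mathcal{F}_n=\sigma(X_1,\dots,X_n)$. A fixed density estimation procedure maps a finite collection of observations to a density w.r.t. $\mu$; for a positive integer $w$ and $n>w$, $\widehat{p}^w_n$ is its output on $X_{n-w},\dots,X_{n-1}$. Let $\widehat{Z}^w_n:=\log(\widehat{p}^w_n(X_n)/p_0(X_n))$ for $n>w$; $\overline{W}(1)=\dots=\overline{W}(w)=0$, $\overline{W}(n)=(\overline{W}(n-1))^++\widehat{Z}^w_n$ for $n>w$, and $\overline{\tau}(b):=\inf\{n>w:\overline{W}(n)\ge b\}$. *)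

theory Defs
  imports "HOL-Probability.Probability"
begin

definition is_density :: "'a measure \<Rightarrow> ('a \<Rightarrow> real) \<Rightarrow> bool" where
  "is_density mu p \<longleftrightarrow> p \<in> borel_measurable mu \<and> (\<forall>x\<in>space mu. 0 \<le> p x)
      \<and> (\<integral>\<^sup>+ x. ennreal (p x) \<partial>mu) = 1"

text \<open>Law of the whole observation sequence with change point nu: coordinate i of
  omega is X_i (i \<ge> 1); X_i has density p0 for i < nu and p1 for i \<ge> nu.
  Coordinate 0 is an unused dummy coordinate (distributed with p0, since nu \<ge> 1).\<close>
definition Pnu :: "'a measure \<Rightarrow> ('a \<Rightarrow> real) \<Rightarrow> ('a \<Rightarrow> real) \<Rightarrow> nat \<Rightarrow> (nat \<Rightarrow> 'a) measure" where
  "Pnu mu p0 p1 nu = (\<Pi>\<^sub>M i\<in>UNIV. density mu (\<lambda>x. ennreal (if i < nu then p0 x else p1 x)))"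

definition filt :: "'a measure \<Rightarrow> (nat \<Rightarrow> 'a) measure \<Rightarrow> nat \<Rightarrow> (nat \<Rightarrow> 'a) measure" where
  "filt mu M k = sigma (space M)
     {(\<lambda>\<omega>. \<omega> i) -` A \<inter> space M | i A. i \<in> {1..k} \<and> A \<in> sets mu}"

text \<open>The estimated density from the window X_{n-w},...,X_{n-1}, presented to the
  estimation procedure as the tuple j \<mapsto> X_{n-w+j}, j < w.\<close>
definition window :: "nat \<Rightarrow> nat \<Rightarrow> (nat \<Rightarrow> 'a) \<Rightarrow> (nat \<Rightarrow> 'a)" where
  "window w n \<omega> = (\<lambda>j\<in>{..<w}. \<omega> (n - w + j))"

definition Zhat :: "((nat \<Rightarrow> 'a) \<Rightarrow> 'a \<Rightarrow> real) \<Rightarrow> ('a \<Rightarrow> real) \<Rightarrow> nat \<Rightarrow> nat \<Rightarrow> (nat \<Rightarrow> 'a) \<Rightarrow> real" where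
  "Zhat est p0 w n \<omega> = ln (est (window w n \<omega>) (\<omega> n) / p0 (\<omega> n))"

fun Wbar :: "((nat \<Rightarrow> 'a) \<Rightarrow> 'a \<Rightarrow> real) \<Rightarrow> ('a \<Rightarrow> real) \<Rightarrow> nat \<Rightarrow> nat \<Rightarrow> (nat \<Rightarrow> 'a) \<Rightarrow> real" where
  "Wbar est p0 w 0 \<omega> = 0"
| "Wbar est p0 w (Suc n) \<omega> =
     (if Suc n \<le> w then 0 else max (Wbar est p0 w n \<omega>) 0 + Zhat est p0 w (Suc n) \<omega>)"

definition taubar :: "((nat \<Rightarrow> 'a) \<Rightarrow> 'a \<Rightarrow> real) \<Rightarrow> ('a \<Rightarrow> real) \<Rightarrow> nat \<Rightarrow> real \<Rightarrow> (nat \<Rightarrow> 'a) \<Rightarrow> enat" where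
  "taubar est p0 w b \<omega> =
     (if \<exists>n>w. b \<le> Wbar est p0 w n \<omega> then enat (LEAST n. n > w \<and> b \<le> Wbar est p0 w n \<omega>) else \<infinity>)"

end

theory Submission imports Defs begin

lemma comp_meas:
  assumes "\<And>i. sets (N i) = sets mu"
  shows "(\<lambda>\<omega>. \<omega> i) \<in> measurable (PiM UNIV N) mu"
  using measurable_component_singleton[of i UNIV N] assms
  by (simp add: measurable_cong_sets[OF refl assms[of i, symmetric]])

lemma window_meas:
  assumes "\<And>i. sets (N i) = sets mu"
  shows "window w n \<in> measurable (PiM UNIV N) (PiM {..<w} (\<lambda>_. mu))"
  unfolding window_def by (rule measurable_restrict) (rule comp_meas[OF assms])

lemma Zhat_meas:
  assumes N: "\<And>i. sets (N i) = sets mu"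
    and est_meas: "(\<lambda>(v, x). est v x) \<in> borel_measurable ((\<Pi>\<^sub>M j\<in>{..<w}. mu) \<Otimes>\<^sub>M mu)"
    and p0m: "p0 \<in> borel_measurable mu"
  shows "Zhat est p0 w n \<in> borel_measurable (PiM UNIV N)"
proof -
  have "(\<lambda>\<omega>. (window w n \<omega>, \<omega> n)) \<in> measurable (PiM UNIV N) ((\<Pi>\<^sub>M j\<in>{..<w}. mu) \<Otimes>\<^sub>M mu)"
    by (intro measurable_Pair window_meas comp_meas N)
  from measurable_comp[OF this est_meas]
  have e: "(\<lambda>\<omega>. est (window w n \<omega>) (\<omega> n)) \<in> borel_measurable (PiM UNIV N)" by (simp add: o_def)
  have p: "(\<lambda>\<omega>. p0 (\<omega> n)) \<in> borel_measurable (PiM UNIV N)"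
    using measurable_comp[OF comp_meas[OF N] p0m] by (simp add: o_def)
  show ?thesis unfolding Zhat_def using e p by measurable
qed

lemma Wbar_meas:
  assumes N: "\<And>i. sets (N i) = sets mu"
    and est_meas: "(\<lambda>(v, x). est v x) \<in> borel_measurable ((\<Pi>\<^sub>M j\<in>{..<w}. mu) \<Otimes>\<^sub>M mu)"
    and p0m: "p0 \<in> borel_measurable mu"
  shows "Wbar est p0 w n \<in> borel_measurable (PiM UNIV N)"
proof (induction n)
  case 0 then show ?case by simp
next
  case (Suc n)
  note [measurable] = Suc Zhat_meas[OF N est_meas p0m, of "Suc n"]
  show ?case by (simp only: Wbar.simps) measurable
qed

lemma tau_meas:
  assumes N: "\<And>i. sets (N i) = sets mu"
    and est_meas: "(\<lambda>(v, x). est v x) \<in> borel_measurable ((\<Pi>\<^sub>M j\<in>{..<w}. mu) \<Otimes>\<^sub>M mu)"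
    and p0m: "p0 \<in> borel_measurable mu"
  shows "(\<lambda>\<omega>. ennreal_of_enat (taubar est p0 w b \<omega>)) \<in> borel_measurable (PiM UNIV N)"
proof -
  note [measurable] = Wbar_meas[OF N est_meas p0m]
  have 1: "(\<lambda>\<omega>. taubar est p0 w b \<omega>) \<in> measurable (PiM UNIV N) (count_space UNIV)"
    unfolding taubar_def by measurable
  show ?thesis
    by (rule measurable_compose[OF 1]) simp
qed


lemma Wbar_shift:
  fixes \<omega> :: "nat \<Rightarrow> 'a"
  assumes nu: "1 \<le> nu" and w: "0 < w"
  defines "\<omega>' \<equiv> (\<lambda>i. if i = 0 then \<omega> 0 else \<omega> (i + nu - 1))"
  shows "k \<ge> w \<Longrightarrow> max (Wbar e q w k \<omega>') 0 \<le> max (Wbar e q w (k + nu - 1) \<omega>) 0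
          \<and> (k > w \<longrightarrow> Wbar e q w k \<omega>' \<le> Wbar e q w (k + nu - 1) \<omega>)"
proof (induction k)
  case 0 then show ?case using w by simp
next
  case (Suc k)
  show ?case
  proof (cases "Suc k = w")
    case True
    then show ?thesis by (cases k) auto
  next
    case False
    with Suc.prems have kw: "k \<ge> w" by simp
    with Suc.IH have IH: "max (Wbar e q w k \<omega>') 0 \<le> max (Wbar e q w (k + nu - 1) \<omega>) 0" by simp
    have Z: "Zhat e q w (Suc k) \<omega>' = Zhat e q w (k + nu) \<omega>"
    proof -
      have "window w (Suc k) \<omega>' = window w (k + nu) \<omega>"
        unfolding window_def \<omega>'_def using kw nu by (intro restrict_ext) (auto simp: ac_simps)
      moreover have "\<omega>' (Suc k) = \<omega> (k + nu)" unfolding \<omega>'_def using nu by simp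
      ultimately show ?thesis unfolding Zhat_def by simp
    qed
    have e1: "Wbar e q w (Suc k) \<omega>' = max (Wbar e q w k \<omega>') 0 + Zhat e q w (Suc k) \<omega>'"
      using kw False by simp
    obtain m where m: "k + nu = Suc m" using nu by (cases nu) auto
    have e2: "Wbar e q w (k + nu) \<omega> = max (Wbar e q w (k + nu - 1) \<omega>) 0 + Zhat e q w (k + nu) \<omega>"
      using kw m nu by simp
    have le: "Wbar e q w (Suc k) \<omega>' \<le> Wbar e q w (k + nu) \<omega>"
      using e1 e2 Z IH by simp
    then show ?thesis using nu by (auto simp: max_def)
  qed
qed

lemma tau_shift:
  fixes \<omega> :: "nat \<Rightarrow> 'a"
  assumes nu: "1 \<le> nu" and w: "0 < w"
  shows "ennreal_of_enat (taubar est p0 w b \<omega>) + 1 - of_nat nu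
     \<le> ennreal_of_enat (taubar est p0 w b (\<lambda>i. if i = 0 then \<omega> 0 else \<omega> (i + nu - 1)))"
proof -
  let ?\<omega>' = "\<lambda>i. if i = 0 then \<omega> 0 else \<omega> (i + nu - 1)"
  show ?thesis
  proof (cases "\<exists>n>w. b \<le> Wbar est p0 w n ?\<omega>'")
    case False
    then have "taubar est p0 w b ?\<omega>' = \<infinity>" by (simp add: taubar_def)
    then show ?thesis by simp
  next
    case True
    define n where "n = (LEAST n. n > w \<and> b \<le> Wbar est p0 w n ?\<omega>')"
    have n: "n > w" "b \<le> Wbar est p0 w n ?\<omega>'"
      using LeastI_ex[OF True] unfolding n_def by auto
    have "Wbar est p0 w n ?\<omega>' \<le> Wbar est p0 w (n + nu - 1) \<omega>"
      using Wbar_shift[OF nu w, where k=n and \<omega>=\<omega> and e=est and q=p0] n by simp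
    with n nu have P: "n + nu - 1 > w \<and> b \<le> Wbar est p0 w (n + nu - 1) \<omega>" by auto
    hence ex: "\<exists>m>w. b \<le> Wbar est p0 w m \<omega>" by blast
    have L: "(LEAST m. m > w \<and> b \<le> Wbar est p0 w m \<omega>) \<le> n + nu - 1"
      by (rule Least_le) (rule P)
    have "ennreal_of_enat (taubar est p0 w b \<omega>) + 1 - of_nat nu
        = of_nat (LEAST m. m > w \<and> b \<le> Wbar est p0 w m \<omega>) + 1 - of_nat nu"
      using ex by (simp add: taubar_def)
    also have "\<dots> \<le> of_nat (n + nu - 1) + 1 - of_nat nu"
      by (intro ennreal_minus_mono add_right_mono) (use L in simp_all)
    also have "\<dots> = of_nat n"
    proof -
      have "of_nat (n + nu - 1) + (1::ennreal) = of_nat (n + nu)"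
        using nu by (metis Suc_diff_1 add_gr_0 less_le_trans of_nat_Suc zero_less_one add.commute)
      also have "\<dots> = of_nat n + of_nat nu" by simp
      finally show ?thesis by (simp add: ennreal_add_diff_cancel_right)
    qed
    also have "\<dots> = ennreal_of_enat (taubar est p0 w b ?\<omega>')"
      using True by (simp add: taubar_def n_def)
    finally show ?thesis .
  qed
qed


lemma distr_merge_PiM_inf:
  assumes M: "\<And>i. i \<in> I \<union> J \<Longrightarrow> prob_space (M i)" and IJ: "I \<inter> J = {}"
  shows "distr (PiM I M \<Otimes>\<^sub>M PiM J M) (PiM (I \<union> J) M) (merge I J) = PiM (I \<union> J) M"
proof (rule measure_eqI_PiM_infinite[symmetric, OF refl])
  interpret PI: prob_space "PiM I M" using M by (intro prob_space_PiM) auto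
  interpret PJ: prob_space "PiM J M" using M by (intro prob_space_PiM) auto
  interpret PU: prob_space "PiM (I \<union> J) M" using M by (intro prob_space_PiM) auto
  show "finite_measure (PiM (I \<union> J) M)" by unfold_locales
  fix K A assume K: "finite K" "K \<subseteq> I \<union> J" and A: "\<And>i. i \<in> K \<Longrightarrow> A i \<in> sets (M i)"
  let ?X = "prod_emb (I \<union> J) M K (Pi\<^sub>E K A)"
  have "PiM (I \<union> J) M ?X = (\<Prod>i\<in>K. M i (A i))"
    using M K A by (intro emeasure_PiM_emb) auto
  also have "\<dots> = (\<Prod>i\<in>K \<inter> I. M i (A i)) * (\<Prod>i\<in>K \<inter> J. M i (A i))"
  proof -
    have "K = (K \<inter> I) \<union> (K \<inter> J)" using K by auto
    then have "(\<Prod>i\<in>K. M i (A i)) = (\<Prod>i\<in>(K \<inter> I) \<union> (K \<inter> J). M i (A i))" by simp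
    also have "\<dots> = (\<Prod>i\<in>K \<inter> I. M i (A i)) * (\<Prod>i\<in>K \<inter> J. M i (A i))"
      using K IJ by (intro prod.union_disjoint) auto
    finally show ?thesis .
  qed
  also have "(\<Prod>i\<in>K \<inter> I. M i (A i)) = PiM I M (prod_emb I M (K \<inter> I) (Pi\<^sub>E (K \<inter> I) A))"
    using M K A by (intro emeasure_PiM_emb[symmetric]) auto
  also have "(\<Prod>i\<in>K \<inter> J. M i (A i)) = PiM J M (prod_emb J M (K \<inter> J) (Pi\<^sub>E (K \<inter> J) A))"
    using M K A by (intro emeasure_PiM_emb[symmetric]) auto
  also have "PiM I M (prod_emb I M (K \<inter> I) (Pi\<^sub>E (K \<inter> I) A)) * PiM J M (prod_emb J M (K \<inter> J) (Pi\<^sub>E (K \<inter> J) A))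
      = (PiM I M \<Otimes>\<^sub>M PiM J M) (prod_emb I M (K \<inter> I) (Pi\<^sub>E (K \<inter> I) A) \<times> prod_emb J M (K \<inter> J) (Pi\<^sub>E (K \<inter> J) A))"
    using K A by (intro PJ.emeasure_pair_measure_Times[symmetric] sets_PiM_I) auto
  also have "prod_emb I M (K \<inter> I) (Pi\<^sub>E (K \<inter> I) A) \<times> prod_emb J M (K \<inter> J) (Pi\<^sub>E (K \<inter> J) A)
      = merge I J -` ?X \<inter> space (PiM I M \<Otimes>\<^sub>M PiM J M)"
    using K IJ by (auto simp: prod_emb_def space_pair_measure space_PiM PiE_iff merge_def extensional_def) (metis IntI disjoint_iff)+
  also have "(PiM I M \<Otimes>\<^sub>M PiM J M) \<dots> = distr (PiM I M \<Otimes>\<^sub>M PiM J M) (PiM (I \<union> J) M) (merge I J) ?X"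
    using K A by (intro emeasure_distr[symmetric] sets_PiM_I) auto
  finally show "PiM (I \<union> J) M ?X = distr (PiM I M \<Otimes>\<^sub>M PiM J M) (PiM (I \<union> J) M) (merge I J) ?X" .
qed simp


lemma prob_density_if:
  assumes p0: "is_density mu p0" and p1: "is_density mu p1"
  shows "prob_space (density mu (\<lambda>x. ennreal (if c then p0 x else p1 x)))"
proof -
  have *: "prob_space (density mu (\<lambda>x. ennreal (p x)))" if "is_density mu p" for p
  proof (rule prob_spaceI)
    have m: "p \<in> borel_measurable mu" and I: "(\<integral>\<^sup>+ x. ennreal (p x) \<partial>mu) = 1"
      using that by (auto simp: is_density_def)
    have "emeasure (density mu (\<lambda>x. ennreal (p x))) (space mu) = (\<integral>\<^sup>+ x. ennreal (p x) * indicator (space mu) x \<partial>mu)"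
      using m by (intro emeasure_density) auto
    also have "\<dots> = (\<integral>\<^sup>+ x. ennreal (p x) \<partial>mu)"
      by (intro nn_integral_cong) auto
    finally show "emeasure (density mu (\<lambda>x. ennreal (p x))) (space (density mu (\<lambda>x. ennreal (p x)))) = 1"
      using I by simp
  qed
  show ?thesis using *[OF p0] *[OF p1] by (cases c) auto
qed

theorem lemma5:
  fixes mu :: "'a::euclidean_space measure"
    and p0 p1 :: "'a \<Rightarrow> real"
    and est :: "(nat \<Rightarrow> 'a) \<Rightarrow> 'a \<Rightarrow> real"
    and w nu :: nat and b :: real
  assumes mu_borel: "sets mu = sets borel"
    and p0: "is_density mu p0" and p1: "is_density mu p1"
    and est_density: "\<And>v. is_density mu (est v)"
    and est_meas: "(\<lambda>(v, x). est v x) \<in> borel_measurable ((\<Pi>\<^sub>M j\<in>{..<w}. mu) \<Otimes>\<^sub>M mu)"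
    and w: "0 < w" and nu: "1 \<le> nu" and b: "0 < b"
  shows "esssup (Pnu mu p0 p1 nu)
           (nn_cond_exp (Pnu mu p0 p1 nu) (filt mu (Pnu mu p0 p1 nu) (nu - 1))
              (\<lambda>\<omega>. ennreal_of_enat (taubar est p0 w b \<omega>) + 1 - of_nat nu))
         \<le> (\<integral>\<^sup>+ \<omega>. ennreal_of_enat (taubar est p0 w b \<omega>) \<partial>(Pnu mu p0 p1 1))"
proof -
  define D where "D = (\<lambda>i. density mu (\<lambda>x. ennreal (if i < nu then p0 x else p1 x)))"
  define M where "M = Pnu mu p0 p1 nu"
  define F where "F = filt mu M (nu - 1)"
  define T where "T = (\<lambda>\<omega>. ennreal_of_enat (taubar est p0 w b \<omega>))"
  define f where "f = (\<lambda>i::nat. if i = 0 then 0 else i + nu - 1)"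
  define g where "g = (\<lambda>\<omega>. T (\<lambda>i. \<omega> (f i)))"
  define I where "I = {1..<nu}"
  define J where "J = UNIV - I"
  define c where "c = (\<integral>\<^sup>+ \<omega>. T \<omega> \<partial>(Pnu mu p0 p1 1))"
  have p0m: "p0 \<in> borel_measurable mu" using p0 by (simp add: is_density_def)
  have MD: "M = PiM UNIV D" unfolding M_def D_def Pnu_def by simp
  have probD: "\<And>i. prob_space (D i)" unfolding D_def using p0 p1 by (intro prob_density_if)
  have setsD: "\<And>i. sets (D i) = sets mu" unfolding D_def by simp
  have setsDf: "\<And>i. sets (D (f i)) = sets mu" using setsD by simp
  interpret MP: prob_space M unfolding MD using probD by (intro prob_space_PiM) auto
  have Tm: "\<And>N. (\<And>i. sets (N i) = sets mu) \<Longrightarrow> T \<in> borel_measurable (PiM UNIV N)"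
    unfolding T_def using tau_meas est_meas p0m by blast
  have Tm1: "T \<in> borel_measurable M" unfolding MD by (rule Tm[OF setsD])
  have shm: "(\<lambda>\<omega>. \<lambda>i\<in>UNIV. \<omega> (f i)) \<in> measurable M (PiM UNIV (\<lambda>i. D (f i)))"
    unfolding MD by (intro measurable_restrict measurable_component_singleton) auto
  have gm: "g \<in> borel_measurable M"
  proof -
    have "(\<lambda>\<omega>. T (\<lambda>i\<in>UNIV. \<omega> (f i))) \<in> borel_measurable M"
      using measurable_comp[OF shm Tm[OF setsDf]] by (simp add: o_def)
    then show ?thesis unfolding g_def by (simp add: restrict_def)
  qed
  define h where "h = (\<lambda>\<omega>. T \<omega> + 1 - of_nat nu)"
  have hm: "h \<in> borel_measurable M" unfolding h_def using Tm1 by measurable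
  have hg: "\<And>\<omega>. h \<omega> \<le> g \<omega>"
    unfolding h_def g_def T_def f_def using tau_shift[OF nu w] by (simp add: if_distrib)
  have MU: "M = PiM (I \<union> J) D" using MD by (simp add: J_def)
  have IJ: "I \<inter> J = {}" by (auto simp: J_def)
  have merge_eq: "distr (PiM I D \<Otimes>\<^sub>M PiM J D) M (merge I J) = M"
    unfolding MU using probD by (intro distr_merge_PiM_inf[OF _ IJ])
  define G where "G = {(\<lambda>\<omega>. \<omega> i) -` A \<inter> space M | i A. i \<in> {1..nu-1} \<and> A \<in> sets mu}"
  have F_eq: "F = sigma (space M) G" unfolding F_def filt_def G_def by simp
  have G_sub: "G \<subseteq> Pow (space M)" unfolding G_def by auto
  have spF: "space F = space M" by (simp add: F_eq space_measure_of_conv)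
  have setsF: "sets F = sigma_sets (space M) G" unfolding F_eq by (rule sets_measure_of[OF G_sub])
  have GM: "G \<subseteq> sets M"
  proof
    fix X assume "X \<in> G"
    then obtain i A where iA: "A \<in> sets mu" "X = (\<lambda>\<omega>. \<omega> i) -` A \<inter> space M" unfolding G_def by auto
    have "(\<lambda>\<omega>. \<omega> i) \<in> measurable M mu" unfolding MD by (rule comp_meas[OF setsD])
    then show "X \<in> sets M" using iA by (simp add: measurable_sets)
  qed
  have sub: "subalgebra M F"
    unfolding subalgebra_def using spF setsF sets.sigma_sets_subset[OF GM] by simp
  interpret S: sigma_finite_subalgebra M F
    by (intro finite_measure_subalgebra_is_sigma_finite finite_measure_subalgebra.intro
        MP.finite_measure_axioms finite_measure_subalgebra_axioms.intro sub)
  define V where "V = vimage_algebra (space M) (\<lambda>\<omega>. restrict \<omega> I) (PiM I D)"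
  have rI: "(\<lambda>\<omega>. restrict \<omega> I) \<in> space M \<rightarrow> space (PiM I D)" unfolding MD by (auto simp: space_PiM)
  have setsV: "sets V = {(\<lambda>\<omega>. restrict \<omega> I) -` B \<inter> space M | B. B \<in> sets (PiM I D)}"
    unfolding V_def by (rule sets_vimage_algebra2[OF rI])
  have GV: "G \<subseteq> sets V"
  proof
    fix X assume "X \<in> G"
    then obtain i A where iA: "i \<in> {1..nu-1}" "A \<in> sets mu" "X = (\<lambda>\<omega>. \<omega> i) -` A \<inter> space M"
      unfolding G_def by auto
    have iI: "i \<in> I" using iA nu unfolding I_def by auto
    define B where "B = (\<lambda>x. x i) -` A \<inter> space (PiM I D)"
    have "(\<lambda>x. x i) \<in> measurable (PiM I D) (D i)" using iI by (rule measurable_component_singleton)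
    then have "B \<in> sets (PiM I D)" unfolding B_def using iA setsD by (simp add: measurable_sets)
    moreover have "X = (\<lambda>\<omega>. restrict \<omega> I) -` B \<inter> space M"
      unfolding iA B_def using rI iI by auto
    ultimately show "X \<in> sets V" unfolding setsV by blast
  qed
  have FV: "sets F \<subseteq> sets V"
    using sets.sigma_sets_subset[OF GV] by (simp add: V_def setsF)
  interpret PI: prob_space "PiM I D" using probD by (intro prob_space_PiM) auto
  interpret PJ: prob_space "PiM J D" using probD by (intro prob_space_PiM) auto
  have distr_I: "distr M (PiM I D) (\<lambda>\<omega>. restrict \<omega> I) = PiM I D"
    using distr_PiM_reindex[of UNIV D id I] probD unfolding MD by simp
  have fJ: "\<And>i. f i \<in> J" "\<And>i. f i \<notin> I" unfolding f_def J_def I_def using nu by auto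
  have P1: "Pnu mu p0 p1 1 = PiM UNIV (\<lambda>i. D (f i))"
  proof -
    have ar: "\<And>x. 0 < x \<Longrightarrow> \<not> (x + nu - Suc 0 < nu)" by arith
    show ?thesis unfolding Pnu_def D_def f_def using nu by (intro PiM_cong) (auto simp: ar)
  qed
  have injf: "inj_on f UNIV" unfolding f_def inj_on_def using nu by auto
  have distr_J: "distr (PiM J D) (PiM UNIV (\<lambda>i. D (f i))) (\<lambda>\<omega>. \<lambda>n\<in>UNIV. \<omega> (f n)) = PiM UNIV (\<lambda>i. D (f i))"
    using probD fJ injf by (intro distr_PiM_reindex) auto
  have shJ: "(\<lambda>\<omega>. \<lambda>n\<in>UNIV. \<omega> (f n)) \<in> measurable (PiM J D) (PiM UNIV (\<lambda>i. D (f i)))"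
    using fJ by (intro measurable_restrict measurable_component_singleton) auto
  have c_eq: "(\<integral>\<^sup>+ y. T (\<lambda>i. y (f i)) \<partial>PiM J D) = c"
  proof -
    have "c = (\<integral>\<^sup>+ \<omega>. T \<omega> \<partial>distr (PiM J D) (PiM UNIV (\<lambda>i. D (f i))) (\<lambda>\<omega>. \<lambda>n\<in>UNIV. \<omega> (f n)))"
      unfolding c_def distr_J P1 ..
    also have "\<dots> = (\<integral>\<^sup>+ y. T (\<lambda>n\<in>UNIV. y (f n)) \<partial>PiM J D)"
      using Tm[OF setsDf] by (intro nn_integral_distr[OF shJ]) simp
    finally show ?thesis by (simp add: restrict_def)
  qed
  have key: "(\<integral>\<^sup>+ x \<in> A. g x \<partial>M) = (\<integral>\<^sup>+ x \<in> A. c \<partial>M)" if A: "A \<in> sets F" for A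
  proof -
    obtain B where B: "B \<in> sets (PiM I D)" "A = (\<lambda>\<omega>. restrict \<omega> I) -` B \<inter> space M"
      using A FV setsV by auto
    have mergem: "merge I J \<in> measurable (PiM I D \<Otimes>\<^sub>M PiM J D) M"
      unfolding MU by (rule measurable_merge)
    have AM: "A \<in> sets M" using A sub by (auto simp: subalgebra_def)
    have Tsh: "(\<lambda>y. T (\<lambda>i. y (f i))) \<in> borel_measurable (PiM J D)"
      using measurable_comp[OF shJ Tm[OF setsDf]] by (simp add: o_def restrict_def)
    have "(\<integral>\<^sup>+ x \<in> A. g x \<partial>M) = (\<integral>\<^sup>+ x. g x * indicator A x \<partial>distr (PiM I D \<Otimes>\<^sub>M PiM J D) M (merge I J))"
      by (simp add: merge_eq)
    also have "\<dots> = (\<integral>\<^sup>+ z. g (merge I J z) * indicator A (merge I J z) \<partial>(PiM I D \<Otimes>\<^sub>M PiM J D))"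
      using gm AM by (intro nn_integral_distr[OF mergem]) simp
    also have "\<dots> = (\<integral>\<^sup>+ z. T (\<lambda>i. snd z (f i)) * indicator B (fst z) \<partial>(PiM I D \<Otimes>\<^sub>M PiM J D))"
    proof (intro nn_integral_cong)
      fix z assume z: "z \<in> space (PiM I D \<Otimes>\<^sub>M PiM J D)"
      obtain x y where xy: "z = (x, y)" "x \<in> space (PiM I D)" "y \<in> space (PiM J D)"
        using z by (auto simp: space_pair_measure)
      have "g (merge I J z) = T (\<lambda>i. snd z (f i))"
        unfolding g_def xy using fJ by (simp add: merge_def)
      moreover have "merge I J z \<in> space M" using measurable_space[OF mergem z] .
      moreover have "restrict (merge I J z) I = fst z"
        using xy by (auto simp: merge_def restrict_def space_PiM extensional_def fun_eq_iff)
      ultimately show "g (merge I J z) * indicator A (merge I J z) = T (\<lambda>i. snd z (f i)) * indicator B (fst z)"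
        unfolding B(2) by (simp add: indicator_def)
    qed
    also have "\<dots> = (\<integral>\<^sup>+ x. \<integral>\<^sup>+ y. T (\<lambda>i. y (f i)) * indicator B x \<partial>PiM J D \<partial>PiM I D)"
    proof -
      have m2: "(\<lambda>z. T (\<lambda>i. snd z (f i)) * indicator B (fst z)) \<in> borel_measurable (PiM I D \<Otimes>\<^sub>M PiM J D)"
        using Tsh B(1) by measurable
      show ?thesis using PJ.nn_integral_fst[OF m2] by simp
    qed
    also have "\<dots> = (\<integral>\<^sup>+ x. c * indicator B x \<partial>PiM I D)"
      using Tsh by (intro nn_integral_cong) (simp add: nn_integral_multc c_eq)
    also have "\<dots> = c * emeasure (PiM I D) B"
      using B(1) by (rule nn_integral_cmult_indicator)
    also have "emeasure (PiM I D) B = emeasure M A"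
    proof -
      have "emeasure (PiM I D) B = emeasure (distr M (PiM I D) (\<lambda>\<omega>. restrict \<omega> I)) B"
        by (simp add: distr_I)
      also have "\<dots> = emeasure M A"
        unfolding B(2) using B(1) unfolding MD by (intro emeasure_distr measurable_restrict measurable_component_singleton) auto
      finally show ?thesis .
    qed
    also have "c * emeasure M A = (\<integral>\<^sup>+ x \<in> A. c \<partial>M)"
      using AM by (simp add: nn_integral_cmult_indicator)
    finally show ?thesis .
  qed
  have cF: "(\<lambda>_. c) \<in> borel_measurable F" by simp
  have ae1: "AE x in M. c = nn_cond_exp M F g x"
    by (rule S.nn_cond_exp_charact[OF key gm cF])
  have ae2: "AE x in M. nn_cond_exp M F h x \<le> nn_cond_exp M F g x"
    using hg hm gm by (intro S.nn_cond_exp_mono) auto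
  have "esssup M (nn_cond_exp M F h) \<le> c"
    using ae1 ae2 by (intro esssup_I) auto
  then show ?thesis unfolding M_def F_def h_def T_def c_def .
qed

end
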